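(* Let $\mathbb{F}\in\{\mathbb{R},\mathbb{C}\}$ and let $M$ be the $n\times n$ companion matrix of a monic polynomial $f(x)=x^n+a_1x^{n-1}+\cdots+a_n\in\mathbb{F}[x]$. Then there is a tensor $(O;N)$ over $\mathbb{F}$ of rank at most $1$ such that $(E_n;M)-(O;N)$ is diagonalizable over $\mathbb{F}$. In particular $\mathrm{rank}_{\mathbb{F}}(E_n;M)\le n+1$.
   Context: The companion matrix of $f(x)=x^n+a_1x^{n-1}+\cdots+a_{n-1}x+a_n$ is the $n\times n$ matrix with ones on the subdiagonal (entries $(i+1,i)$), last column $(-a_n,-a_{n-1},\dots,-a_1)^T$, and zeros elsewhere. For matrices $A,B$ of the same size $m\times n$, $(A;B)$ denotes the $m\times n\times 2$ tensor with slices $A,B$; tensors are added slicewise. A rank-one $m\times n\times 2$ tensor over $\mathbb{F}$ has the form $(\alpha\,\mathbf{a}\mathbf{b}^T;\beta\,\mathbf{a}\mathbf{b}^T)$ with nonzero $\mathbf{a},\mathbf{b}$ and $(\alpha,\beta)\neq 0$; $\mathrm{rank}_{\mathbb{F}}(T)$ is the minimal number of rank-one tensors summing to $T$. $E_n$ is the identity matrix. An $m\times n\times 2$ tensor $(A;B)$ is diagonalizable over $\mathbb{F}$ if there are nonsingular $P,Q$ over $\mathbb{F}$ and diagonal $D_A,D_B$ with $PAQ=(D_A,O)$, $PBQ=(D_B,O)$ if $m\le n$, and $PAQ=(D_A,O)^T$, $PBQ=(D_B,O)^T$ if $m>n$. *)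

theory Defs
  imports "Jordan_Normal_Form.Matrix" "HOL-Computational_Algebra.Polynomial" Complex_Main
begin

text \<open>Companion matrix of a monic polynomial f of degree n (0-indexed):
  ones on the subdiagonal, entries (i+1,i); last column (-a_n,...,-a_1)^T,
  where a_k = coeff f (n-k), so row i of the last column is - coeff f i.\<close>
definition companion_mat :: "nat \<Rightarrow> 'a::comm_ring_1 poly \<Rightarrow> 'a mat" where
  "companion_mat n f = mat n n (\<lambda>(i,j).
     if j = n - 1 then - coeff f i else if i = j + 1 then 1 else 0)"

text \<open>An m x n x 2 tensor is a pair of m x n matrices (slices).\<close>
type_synonym 'a tensor2 = "'a mat \<times> 'a mat"

definition outer_vec :: "'a::times vec \<Rightarrow> 'a vec \<Rightarrow> 'a mat" where
  "outer_vec a b = mat (dim_vec a) (dim_vec b) (\<lambda>(i,j). a $ i * b $ j)"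

definition tensor_add :: "'a::plus tensor2 \<Rightarrow> 'a tensor2 \<Rightarrow> 'a tensor2" where
  "tensor_add S T = (fst S + fst T, snd S + snd T)"

definition tensor_sub :: "'a::minus tensor2 \<Rightarrow> 'a tensor2 \<Rightarrow> 'a tensor2" where
  "tensor_sub S T = (fst S - fst T, snd S - snd T)"

definition rank_one_tensor :: "nat \<Rightarrow> nat \<Rightarrow> 'a::field tensor2 \<Rightarrow> bool" where
  "rank_one_tensor m n T \<longleftrightarrow> (\<exists>\<alpha> \<beta> a b.
     a \<in> carrier_vec m \<and> b \<in> carrier_vec n \<and> a \<noteq> 0\<^sub>v m \<and> b \<noteq> 0\<^sub>v n \<and>
     (\<alpha>, \<beta>) \<noteq> (0, 0) \<and>
     T = (\<alpha> \<cdot>\<^sub>m outer_vec a b, \<beta> \<cdot>\<^sub>m outer_vec a b))"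

definition tensor_rank :: "nat \<Rightarrow> nat \<Rightarrow> 'a::field tensor2 \<Rightarrow> nat" where
  "tensor_rank m n T = (LEAST k. \<exists>Ts. length Ts = k \<and>
     (\<forall>S\<in>set Ts. rank_one_tensor m n S) \<and>
     T = foldr tensor_add Ts (0\<^sub>m m n, 0\<^sub>m m n))"

text \<open>An m x n matrix of the form (D,O) (if m \<le> n) or (D,O)^T (if m > n)
  with D diagonal: all entries off the main diagonal vanish.\<close>
definition rect_diagonal :: "'a::zero mat \<Rightarrow> bool" where
  "rect_diagonal A \<longleftrightarrow> (\<forall>i<dim_row A. \<forall>j<dim_col A. i \<noteq> j \<longrightarrow> A $$ (i,j) = 0)"

definition tensor_diagonalizable :: "nat \<Rightarrow> nat \<Rightarrow> 'a::field tensor2 \<Rightarrow> bool" where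
  "tensor_diagonalizable m n T \<longleftrightarrow> (\<exists>P Q.
     P \<in> carrier_mat m m \<and> Q \<in> carrier_mat n n \<and> invertible_mat P \<and> invertible_mat Q \<and>
     rect_diagonal (P * fst T * Q) \<and> rect_diagonal (P * snd T * Q))"

definition companion_claim :: "nat \<Rightarrow> 'a::field poly \<Rightarrow> bool" where
  "companion_claim n f \<longleftrightarrow>
     (\<exists>N. N \<in> carrier_mat n n \<and> tensor_rank n n (0\<^sub>m n n, N) \<le> 1 \<and>
        tensor_diagonalizable n n (tensor_sub (1\<^sub>m n, companion_mat n f) (0\<^sub>m n n, N)))
     \<and> tensor_rank n n (1\<^sub>m n, companion_mat n f) \<le> n + 1"

end

theory Submission
  imports Defs "Jordan_Normal_Form.Determinant"
begin

lemma tensor_rank_le: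
  assumes "length Ts = k" "\<forall>S\<in>set Ts. rank_one_tensor m n S"
    "T = foldr tensor_add Ts (0\<^sub>m m n, 0\<^sub>m m n)"
  shows "tensor_rank m n T \<le> k"
  unfolding tensor_rank_def by (rule Least_le) (use assms in blast)

lemma foldr_tadd:
  fixes h :: "nat \<Rightarrow> 'a::comm_ring_1 tensor2"
  assumes "\<forall>k\<in>set xs. fst (h k) \<in> carrier_mat n n \<and> snd (h k) \<in> carrier_mat n n"
    "A0 \<in> carrier_mat n n" "B0 \<in> carrier_mat n n"
  shows "foldr tensor_add (map h xs) (A0,B0) =
   (mat n n (\<lambda>(i,j). A0$$(i,j) + (\<Sum>k\<leftarrow>xs. fst (h k) $$ (i,j))),
    mat n n (\<lambda>(i,j). B0$$(i,j) + (\<Sum>k\<leftarrow>xs. snd (h k) $$ (i,j))))"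
  using assms(1)
proof (induction xs)
  case Nil
  then show ?case using assms(2,3) by (auto intro!: eq_matI)
next
  case (Cons x xs)
  then show ?case by (auto simp: tensor_add_def ac_simps intro!: eq_matI)
qed

lemma vander_inj:
  fixes x :: "'a::field_char_0 vec"
  assumes x: "x \<in> carrier_vec n"
    and z: "mat n n (\<lambda>(k,i). (of_nat k::'a) ^ i) *\<^sub>v x = 0\<^sub>v n"
  shows "x = 0\<^sub>v n"
proof (rule ccontr)
  assume nz: "x \<noteq> 0\<^sub>v n"
  define p where "p = (\<Sum>i<n. monom (x $ i) i)"
  have coeffp: "coeff p i = (if i < n then x $ i else 0)" for i
    unfolding p_def coeff_sum by (auto simp: coeff_monom)
  have "p \<noteq> 0"
  proof
    assume "p = 0"
    hence "x $ i = 0" if "i < n" for i using coeffp[of i] that by auto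
    hence "x = 0\<^sub>v n" using x by (auto intro!: eq_vecI)
    with nz show False by simp
  qed
  have deg: "degree p < n"
  proof -
    have "n > 0" using nz x by (auto intro!: eq_vecI)
    have "degree p \<le> n - 1" unfolding p_def
      by (rule degree_sum_le) (auto intro: order.trans[OF degree_monom_le])
    thus ?thesis using \<open>n>0\<close> by linarith
  qed
  have roots: "poly p (of_nat k) = 0" if "k < n" for k
  proof -
    have "poly p (of_nat k) = (\<Sum>i<n. x $ i * of_nat k ^ i)"
      unfolding p_def poly_sum by (simp add: poly_monom)
    also have "\<dots> = (mat n n (\<lambda>(k,i). (of_nat k::'a) ^ i) *\<^sub>v x) $ k"
      using that x by (auto simp: mult_mat_vec_def scalar_prod_def row_def mult.commute
          intro!: sum.cong)
    also have "\<dots> = 0" using z that by simp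
    finally show ?thesis .
  qed
  have "of_nat ` {..<n} \<subseteq> {r::'a. poly p r = 0}" using roots by auto
  hence "card (of_nat ` {..<n} :: 'a set) \<le> card {r::'a. poly p r = 0}"
    by (rule card_mono[OF poly_roots_finite[OF \<open>p\<noteq>0\<close>]])
  moreover have "card (of_nat ` {..<n} :: 'a set) = n"
    by (subst card_image) (auto simp: inj_on_def)
  ultimately show False using card_poly_roots_bound[OF \<open>p\<noteq>0\<close>] deg by linarith
qed

lemma gpoly:
  fixes n :: nat
  defines "g \<equiv> (\<Prod>k<n. [:- (of_nat k :: 'a::field_char_0), 1:])"
  shows "degree g = n" "coeff g n = 1" "\<And>k. k < n \<Longrightarrow> poly g (of_nat k) = 0"
proof -
  show dg: "degree g = n" unfolding g_def
    by (subst degree_prod_eq_sum_degree) auto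
  have "lead_coeff g = 1" unfolding g_def lead_coeff_prod by simp
  thus "coeff g n = 1" using dg by simp
  show "poly g (of_nat k) = 0" if "k < n" for k
    unfolding g_def poly_prod using that by (auto intro!: bexI[of _ k])
qed

lemma root_sum:
  fixes g :: "'a::field poly"
  assumes "degree g = n" "coeff g n = 1" "poly g x = 0"
  shows "(\<Sum>i<n. x ^ i * coeff g i) = - (x ^ n)"
proof -
  have "0 = (\<Sum>i\<le>n. coeff g i * x ^ i)" using assms poly_altdef[of g x] by simp
  also have "\<dots> = (\<Sum>i<n. x ^ i * coeff g i) + x ^ n"
    using assms by (simp add: lessThan_Suc_atMost[symmetric] mult.commute)
  finally show ?thesis by (simp add: eq_neg_iff_add_eq_0)
qed

lemma VC:
  fixes g :: "'a::field_char_0 poly"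
  assumes dg: "degree g = n" "coeff g n = 1" and rt: "\<And>k. k < n \<Longrightarrow> poly g (of_nat k) = 0"
  shows "mat n n (\<lambda>(k,i). (of_nat k::'a) ^ i) * companion_mat n g =
         mat n n (\<lambda>(i,j). if i = j then of_nat i else 0) * mat n n (\<lambda>(k,i). (of_nat k::'a) ^ i)"
  (is "?V * ?C = ?L * ?V")
proof (rule eq_matI)
  fix k j assume k: "k < dim_row (?L * ?V)" and j: "j < dim_col (?L * ?V)"
  hence k: "k < n" and j: "j < n" by auto
  have R: "(?L * ?V) $$ (k,j) = of_nat k ^ Suc j"
  proof -
    have "(?L * ?V) $$ (k,j) = (\<Sum>l\<in>{0..<n}. (if k = l then of_nat k else 0) * (of_nat l::'a) ^ j)"
      using k j by (auto simp: scalar_prod_def intro!: sum.cong)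
    also have "\<dots> = (\<Sum>l\<in>{0..<n}. if k = l then of_nat k * (of_nat k::'a) ^ j else 0)"
      by (rule sum.cong) auto
    also have "\<dots> = of_nat k * of_nat k ^ j" using k by simp
    finally show ?thesis by simp
  qed
  have "(?V * ?C) $$ (k,j) = (\<Sum>i\<in>{0..<n}. (of_nat k::'a) ^ i *
      (if j = n - 1 then - coeff g i else if i = j + 1 then 1 else 0))"
    using k j by (auto simp: scalar_prod_def companion_mat_def intro!: sum.cong)
  also have "\<dots> = of_nat k ^ Suc j"
  proof (cases "j = n - 1")
    case True
    have "(\<Sum>i\<in>{0..<n}. (of_nat k::'a) ^ i * - coeff g i) = - (\<Sum>i<n. of_nat k ^ i * coeff g i)"
      by (simp add: atLeast0LessThan sum_negf)
    also have "\<dots> = of_nat k ^ n" using root_sum[OF dg rt[OF k]] by simp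
    finally show ?thesis using True j by simp
  next
    case False
    hence "j + 1 < n" using j by auto
    then show ?thesis using False by (simp add: if_distrib cong: if_cong)
  qed
  finally show "(?V * ?C) $$ (k,j) = (?L * ?V) $$ (k,j)" using R by simp
qed (auto simp: companion_mat_def)

lemma generic_claim:
  fixes f :: "'a::field_char_0 poly"
  shows "companion_claim n f"
proof -
  define g where "g = (\<Prod>k<n. [:- (of_nat k :: 'a), 1:])"
  have gp1: "degree g = n" "coeff g n = 1" using gpoly(1,2)[of n] unfolding g_def by auto
  have gp3: "\<And>k. k < n \<Longrightarrow> poly g (of_nat k) = 0"
    unfolding g_def poly_prod by (auto intro!: bexI)
  define lam where "lam = (\<lambda>k::nat. (of_nat k :: 'a))"
  define V where "V = mat n n (\<lambda>(k,i). lam k ^ i)"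
  define L where "L = mat n n (\<lambda>(i,j). if i = j then lam i else 0)"
  define Cg where "Cg = companion_mat n g"
  define Cf where "Cf = companion_mat n f"
  define N where "N = Cf - Cg"
  have VC: "V * Cg = L * V" unfolding V_def L_def Cg_def lam_def using VC[OF gp1 gp3] by simp
  have Vc: "V \<in> carrier_mat n n" and Lc: "L \<in> carrier_mat n n" and Cgc: "Cg \<in> carrier_mat n n"
    and Cfc: "Cf \<in> carrier_mat n n" and Nc: "N \<in> carrier_mat n n"
    by (auto simp: V_def L_def Cg_def Cf_def N_def companion_mat_def)
  have "det V \<noteq> 0"
  proof
    assume "det V = 0"
    then obtain x where "x \<in> carrier_vec n" "x \<noteq> 0\<^sub>v n" "V *\<^sub>v x = 0\<^sub>v n"
      using det_0_iff_vec_prod_zero_field[OF Vc] by auto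
    with vander_inj[of x n] show False unfolding V_def lam_def by auto
  qed
  from det_non_zero_imp_unit[OF Vc this, of "()"]
  obtain Q where Qc: "Q \<in> carrier_mat n n" and QV: "Q * V = 1\<^sub>m n" and VQ: "V * Q = 1\<^sub>m n"
    unfolding Units_def ring_mat_def by auto
  have invV: "invertible_mat V" using Vc Qc QV VQ
    unfolding invertible_mat_def inverts_mat_def square_mat.simps by (intro conjI exI[of _ Q]) auto
  have invQ: "invertible_mat Q" using Vc Qc QV VQ
    unfolding invertible_mat_def inverts_mat_def square_mat.simps by (intro conjI exI[of _ V]) auto
  have VCQ: "V * Cg * Q = L"
  proof -
    have "V * Cg * Q = L * V * Q" using VC by simp
    also have "\<dots> = L * (V * Q)" using Lc Vc Qc by (simp add: assoc_mult_mat)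
    also have "\<dots> = L" using VQ Lc by simp
    finally show ?thesis .
  qed
  have QLV: "Q * L * V = Cg"
  proof -
    have "Q * L * V = Q * (L * V)" using Lc Vc Qc by (simp add: assoc_mult_mat)
    also have "\<dots> = Q * (V * Cg)" using VC by simp
    also have "\<dots> = (Q * V) * Cg" using Cgc Vc Qc by (simp add: assoc_mult_mat)
    also have "\<dots> = Cg" using QV Cgc by simp
    finally show ?thesis .
  qed
  have diag: "tensor_diagonalizable n n (tensor_sub (1\<^sub>m n, Cf) (0\<^sub>m n n, N))"
  proof -
    have ts: "tensor_sub (1\<^sub>m n, Cf) (0\<^sub>m n n, N) = (1\<^sub>m n, Cg)"
      unfolding tensor_sub_def N_def using Cfc Cgc by (auto intro!: eq_matI)
    have "V * 1\<^sub>m n * Q = 1\<^sub>m n" using Vc VQ by simp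
    moreover have "rect_diagonal (1\<^sub>m n :: 'a mat)" by (auto simp: rect_diagonal_def)
    moreover have "rect_diagonal L" by (auto simp: rect_diagonal_def L_def)
    ultimately show ?thesis unfolding ts tensor_diagonalizable_def
      using Vc Qc invV invQ VCQ by (intro exI[of _ V] exI[of _ Q]) auto
  qed
  define a where "a = vec n (\<lambda>i. N $$ (i, n - 1))"
  define b where "b = (unit_vec n (n - 1) :: 'a vec)"
  have Nout: "N = outer_vec a b"
    using Cfc Cgc by (auto intro!: eq_matI simp: outer_vec_def a_def b_def N_def Cf_def Cg_def
        companion_mat_def unit_vec_def)
  define extra where "extra = (if a = 0\<^sub>v n then [] else [(0 \<cdot>\<^sub>m outer_vec a b, 1 \<cdot>\<^sub>m outer_vec a b)])"
  have ex_len: "length extra \<le> 1" unfolding extra_def by auto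
  have ex_r1: "\<forall>S\<in>set extra. rank_one_tensor n n S"
  proof (cases "a = 0\<^sub>v n")
    case False
    hence "n > 0" by (auto simp: a_def)
    hence "b \<noteq> 0\<^sub>v n" unfolding b_def
      by (metis index_unit_vec(1) index_zero_vec(1) diff_less less_numeral_extra(1)
          zero_neq_one)
    thus ?thesis using False unfolding extra_def rank_one_tensor_def
      by (intro ballI exI[of _ 0] exI[of _ 1] exI[of _ a] exI[of _ b]) (auto simp: a_def b_def)
  qed (simp add: extra_def)
  have da: "dim_vec a = n" "dim_vec b = n" by (simp_all add: a_def b_def)
  have ex_eq: "foldr tensor_add extra (0\<^sub>m n n, 0\<^sub>m n n) = (0\<^sub>m n n, N)"
  proof (cases "a = 0\<^sub>v n")
    case True
    hence "N = outer_vec (0\<^sub>v n) b" using Nout by simp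
    hence "N = 0\<^sub>m n n" by (auto intro!: eq_matI simp: outer_vec_def b_def)
    thus ?thesis using True by (simp add: extra_def)
  next
    case False
    thus ?thesis unfolding extra_def Nout
      by (auto simp: tensor_add_def outer_vec_def da intro!: eq_matI)
  qed
  have r0: "tensor_rank n n (0\<^sub>m n n, N) \<le> 1"
    using tensor_rank_le[OF refl ex_r1 ex_eq[symmetric]] ex_len by linarith
  define h where "h = (\<lambda>k. (1 \<cdot>\<^sub>m outer_vec (col Q k) (row V k), lam k \<cdot>\<^sub>m outer_vec (col Q k) (row V k)))"
  have hc: "\<forall>k\<in>set [0..<n]. fst (h k) \<in> carrier_mat n n \<and> snd (h k) \<in> carrier_mat n n"
    using Qc Vc by (auto simp: h_def outer_vec_def)
  have h_r1: "\<forall>S\<in>set (map h [0..<n]). rank_one_tensor n n S"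
  proof
    fix S assume "S \<in> set (map h [0..<n])"
    then obtain k where k: "k < n" and S: "S = h k" by auto
    have rnz: "row V k \<noteq> 0\<^sub>v n"
    proof
      assume "row V k = 0\<^sub>v n"
      hence "row V k $ 0 = 0" using k by simp
      thus False using k by (simp add: V_def)
    qed
    have cnz: "col Q k \<noteq> 0\<^sub>v n"
    proof
      assume z: "col Q k = 0\<^sub>v n"
      have "(V * Q) $$ (k,k) = row V k \<bullet> col Q k" using k Vc Qc by simp
      also have "\<dots> = 0" using z Vc k by simp
      finally show False using VQ k by simp
    qed
    show "rank_one_tensor n n S" unfolding S h_def rank_one_tensor_def
      using rnz cnz Vc Qc by (intro exI[of _ 1] exI[of _ "lam k"] exI[of _ "col Q k"] exI[of _ "row V k"]) auto
  qed
  have QL: "Q * L = mat n n (\<lambda>(i,k). Q $$ (i,k) * lam k)"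
  proof (rule eq_matI)
    fix i k assume ik: "i < dim_row (mat n n (\<lambda>(i,k). Q $$ (i,k) * lam k))"
      "k < dim_col (mat n n (\<lambda>(i,k). Q $$ (i,k) * lam k))"
    have "(Q * L) $$ (i,k) = (\<Sum>l\<in>{0..<n}. Q $$ (i,l) * (if l = k then lam l else 0))"
      using ik Qc by (auto simp: L_def scalar_prod_def intro!: sum.cong)
    also have "\<dots> = (\<Sum>l\<in>{0..<n}. if k = l then Q $$ (i,k) * lam k else 0)"
      by (rule sum.cong) auto
    also have "\<dots> = Q $$ (i,k) * lam k" using ik by simp
    finally show "(Q * L) $$ (i,k) = mat n n (\<lambda>(i,k). Q $$ (i,k) * lam k) $$ (i,k)" using ik by simp
  qed (use Qc Lc in auto)
  have eq1: "(\<Sum>k\<leftarrow>[0..<n]. fst (h k) $$ (i,j)) = (Q * V) $$ (i,j)" if "i < n" "j < n" for i j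
  proof -
    have "(\<Sum>k\<leftarrow>[0..<n]. fst (h k) $$ (i,j)) = (\<Sum>k\<in>{0..<n}. fst (h k) $$ (i,j))"
      by (metis sum_set_upt_conv_sum_list_nat set_upt)
    also have "\<dots> = (Q * V) $$ (i,j)"
      using that Qc Vc by (auto simp: h_def outer_vec_def scalar_prod_def intro!: sum.cong)
    finally show ?thesis .
  qed
  have eq2: "(\<Sum>k\<leftarrow>[0..<n]. snd (h k) $$ (i,j)) = (Q * L * V) $$ (i,j)" if "i < n" "j < n" for i j
  proof -
    have "(\<Sum>k\<leftarrow>[0..<n]. snd (h k) $$ (i,j)) = (\<Sum>k\<in>{0..<n}. snd (h k) $$ (i,j))"
      by (metis sum_set_upt_conv_sum_list_nat set_upt)
    also have "\<dots> = (Q * L * V) $$ (i,j)"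
      unfolding QL using that Qc Vc by (auto simp: h_def outer_vec_def scalar_prod_def ac_simps intro!: sum.cong)
    finally show ?thesis .
  qed
  have eq2': "(\<Sum>k\<leftarrow>[0..<n]. snd (h k) $$ (i,j)) = Cg $$ (i,j)" if "i < n" "j < n" for i j
    using eq2[OF that] QLV by simp
  have NC: "N $$ (i,j) + Cg $$ (i,j) = Cf $$ (i,j)" if "i < n" "j < n" for i j
    using that Cfc Cgc by (simp add: N_def)
  define Ts where "Ts = map h [0..<n] @ extra"
  have Ts_eq: "(1\<^sub>m n, Cf) = foldr tensor_add Ts (0\<^sub>m n n, 0\<^sub>m n n)"
  proof -
    have "foldr tensor_add Ts (0\<^sub>m n n, 0\<^sub>m n n) = foldr tensor_add (map h [0..<n]) (0\<^sub>m n n, N)"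
      unfolding Ts_def by (simp add: ex_eq)
    also have "\<dots> = (1\<^sub>m n, Cf)"
      unfolding foldr_tadd[OF hc zero_carrier_mat Nc]
      using eq1 eq2' QV NC Cfc Nc by (auto intro!: eq_matI)
    finally show ?thesis by simp
  qed
  have "tensor_rank n n (1\<^sub>m n, Cf) \<le> length Ts"
    by (rule tensor_rank_le[OF refl _ Ts_eq]) (use h_r1 ex_r1 in \<open>auto simp: Ts_def\<close>)
  hence rk: "tensor_rank n n (1\<^sub>m n, Cf) \<le> n + 1" using ex_len by (simp add: Ts_def)
  show ?thesis unfolding companion_claim_def Cf_def[symmetric]
    using Nc r0 diag rk by blast
qed

theorem mainTheorem2:
  shows "(\<forall>(f :: real poly) n. lead_coeff f = 1 \<and> degree f = n \<longrightarrow> companion_claim n f) \<and>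
         (\<forall>(f :: complex poly) n. lead_coeff f = 1 \<and> degree f = n \<longrightarrow> companion_claim n f)"
  by (simp add: generic_claim)

end
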